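(* Let $(x_k)_{k\ge1}$ be a sequence of non-negative reals and let $M$ be the strongest-first counting function defined in the context. Then: (1) for every fixed $t\ge1$, the map $s\mapsto M(t,(x_k)_{k=1}^t,s)$ is non-decreasing on $[0,\infty)$; (2) for every fixed $s\ge0$ and all integers $1\le t_1\le t_2$, the map $t\mapsto M(t,(x_k)_{k=1}^t,s)$ is cap-unimodal on $\{t_1,\dots,t_2\}$; in particular $\min_{t_1\le t\le t_2}M(t,(x_k)_{k=1}^t,s)=\min\{M(t_1,(x_k)_{k=1}^{t_1},s),M(t_2,(x_k)_{k=1}^{t_2},s)\}$; (3) for every fixed $s\ge0$ and all integers $1\le t_1\le t_2$, $\max_{t_1\le t\le t_2}M(t,(x_k)_{k=1}^t,s)\le t_2-t_1+M(t_1,(x_k)_{k=1}^{t_1},s)$.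
   Context: For $t\ge1$ and $(x_k)_{k=1}^t\in[0,\infty)^t$ let $x_{1,t}\le x_{2,t}\le\dots\le x_{t,t}$ be the increasing rearrangement (order statistics). The strongest-first counting function is $M(0,\varnothing,s)=0$ and, for $t\ge1$, $M(t,(x_k)_{k=1}^t,s)=0$ if $x_{t,t}>s$, and otherwise $M(t,(x_k)_{k=1}^t,s)=\max\{1\le k\le t:\sum_{j=t-k+1}^{t}x_{j,t}\le s\}$ (the maximal number of largest values which, starting with the biggest, can be summed without exceeding $s$). A function $h$ on an integer interval $\{t_1,\dots,t_2\}$ is called cap-unimodal if it is either monotone, or there is $t^*$ in the interval such that $h$ is non-decreasing on $\{t_1,\dots,t^*\}$ and non-increasing on $\{t^*,\dots,t_2\}$. *)

theory Defs
  imports Complex_Main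
begin

definition order_stats :: "nat \<Rightarrow> (nat \<Rightarrow> real) \<Rightarrow> real list" where
  "order_stats t x = sort (map x [1..<Suc t])"

definition top_sum :: "nat \<Rightarrow> (nat \<Rightarrow> real) \<Rightarrow> nat \<Rightarrow> real" where
  "top_sum t x k = sum_list (take k (rev (order_stats t x)))"

definition M :: "nat \<Rightarrow> (nat \<Rightarrow> real) \<Rightarrow> real \<Rightarrow> nat" where
  "M t x s =
     (if t = 0 then 0
      else if last (order_stats t x) > s then 0
      else Max {k. 1 \<le> k \<and> k \<le> t \<and> top_sum t x k \<le> s})"

definition cap_unimodal :: "(nat \<Rightarrow> nat) \<Rightarrow> nat \<Rightarrow> nat \<Rightarrow> bool" where
  "cap_unimodal h t1 t2 \<longleftrightarrow>
     (\<forall>a\<in>{t1..t2}. \<forall>b\<in>{t1..t2}. a \<le> b \<longrightarrow> h a \<le> h b) \<or>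
     (\<forall>a\<in>{t1..t2}. \<forall>b\<in>{t1..t2}. a \<le> b \<longrightarrow> h b \<le> h a) \<or>
     (\<exists>ts\<in>{t1..t2}.
        (\<forall>a\<in>{t1..ts}. \<forall>b\<in>{t1..ts}. a \<le> b \<longrightarrow> h a \<le> h b) \<and>
        (\<forall>a\<in>{ts..t2}. \<forall>b\<in>{ts..t2}. a \<le> b \<longrightarrow> h b \<le> h a))"

end

theory Submission
  imports Defs "HOL-Library.Multiset"
begin

lemma take_sum_mono_k:
  assumes "\<forall>y\<in>set D. (0::real) \<le> y" "k \<le> k'"
  shows "sum_list (take k D) \<le> sum_list (take k' D)"
proof -
  have "take k' D = take k D @ take (k'-k) (drop k D)"
    using take_add[of k "k'-k" D] assms(2) by simp
  moreover have "0 \<le> sum_list (take (k'-k) (drop k D))"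
    using assms(1) by (intro sum_list_nonneg) (meson in_set_dropD in_set_takeD)
  ultimately show ?thesis by simp
qed

lemma insort_top_mono:
  assumes "(0::real) \<le> a"
  shows "sum_list (take k (rev L)) \<le> sum_list (take k (rev (insort a L)))"
  using assms
proof (induction L arbitrary: k)
  case Nil
  then show ?case by (cases k) auto
next
  case (Cons b L)
  show ?case
  proof (cases "a \<le> b")
    case True
    have "take k (rev L @ [b, a]) = take k (rev L) @ take (k - length L) [b, a]"
         "take k (rev L @ [b]) = take k (rev L) @ take (k - length L) [b]"
      by (simp_all add: take_append)
    moreover have "sum_list (take (k - length L) [b]) \<le> sum_list (take (k - length L) [b, a])"
      using Cons.prems by (cases "k - length L"; cases "k - length L - 1") auto
    ultimately show ?thesis using True by simp
  next
    case False
    have len: "length (insort a L) = Suc (length L)" by simp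
    have sm: "sum_list (insort a L) = a + sum_list L"
      by (induction L) (auto simp: algebra_simps)
    have IH: "\<And>j. sum_list (take j (rev L)) \<le> sum_list (take j (rev (insort a L)))"
      using Cons by blast
    consider "k \<le> length L" | "k = Suc (length L)" | "k > Suc (length L)" by linarith
    then show ?thesis
    proof cases
      case 1
      then show ?thesis using False IH[of k] len by (simp add: take_append)
    next
      case 2
      then show ?thesis using False len sm by (simp add: take_append sum_list_rev)
    next
      case 3
      then show ?thesis using False len sm Cons.prems by (simp add: take_append sum_list_rev)
    qed
  qed
qed

lemma os_nonneg:
  assumes "\<forall>k\<ge>1. 0 \<le> x k"
  shows "\<forall>y\<in>set (order_stats t x). 0 \<le> y"
  using assms by (auto simp: order_stats_def)

lemma os_len: "length (order_stats t x) = t"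
  by (simp add: order_stats_def)

lemma os_Suc: "order_stats (Suc t) x = insort (x (Suc t)) (order_stats t x)"
proof -
  have "sort (map x [1..<Suc (Suc t)]) = insort (x (Suc t)) (sort (map x [1..<Suc t]))"
    by (rule properties_for_sort) (auto simp: sorted_insort)
  then show ?thesis by (simp add: order_stats_def)
qed

lemma top_mono_k:
  assumes "\<forall>k\<ge>1. 0 \<le> x k" "k \<le> k'"
  shows "top_sum t x k \<le> top_sum t x k'"
  unfolding top_sum_def using os_nonneg[OF assms(1)] assms(2)
  by (intro take_sum_mono_k) auto

lemma top_mono_t:
  assumes "\<forall>k\<ge>1. 0 \<le> x k" "t \<le> t'"
  shows "top_sum t x k \<le> top_sum t' x k"
  using assms(2)
proof (induction t' rule: dec_induct)
  case base
  then show ?case by simp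
next
  case (step n)
  have "top_sum n x k \<le> top_sum (Suc n) x k"
    unfolding top_sum_def os_Suc using assms(1)
    by (intro insort_top_mono) auto
  then show ?case using step by linarith
qed

lemma last_top:
  assumes "t \<ge> 1"
  shows "last (order_stats t x) = top_sum t x 1"
proof -
  have "order_stats t x \<noteq> []" using os_len[of t x] assms by auto
  then have "take 1 (rev (order_stats t x)) = [last (order_stats t x)]"
    by (metis hd_rev rev_is_Nil_conv take_Suc take_eq_Nil One_nat_def list.collapse take_Suc_Cons)
  then show ?thesis by (simp add: top_sum_def)
qed

lemma M_ge:
  assumes nn: "\<forall>k\<ge>1. 0 \<le> x k" and t: "t \<ge> 1"
  shows "k \<le> M t x s \<longleftrightarrow> k = 0 \<or> (k \<le> t \<and> top_sum t x k \<le> s)"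
proof (cases "last (order_stats t x) > s")
  case True
  then have "M t x s = 0" by (simp add: M_def)
  moreover have "\<not> (k \<ge> 1 \<and> top_sum t x k \<le> s)"
    using True top_mono_k[OF nn, of 1 k t] last_top[OF t, of x] by auto
  ultimately show ?thesis by auto
next
  case False
  define S where "S = {k. 1 \<le> k \<and> k \<le> t \<and> top_sum t x k \<le> s}"
  have MS: "M t x s = Max S" using False t by (simp add: M_def S_def)
  have fin: "finite S" unfolding S_def by auto
  have "1 \<in> S" using False t last_top[OF t, of x] by (auto simp: S_def)
  show ?thesis
  proof
    assume "k \<le> M t x s"
    moreover have "Max S \<in> S" using fin \<open>1 \<in> S\<close> by (intro Max_in) auto
    ultimately show "k = 0 \<or> (k \<le> t \<and> top_sum t x k \<le> s)"
      using top_mono_k[OF nn, of k "Max S" t] unfolding MS S_def by auto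
  next
    assume H: "k = 0 \<or> (k \<le> t \<and> top_sum t x k \<le> s)"
    show "k \<le> M t x s"
    proof (cases "k = 0")
      case False
      with H have "k \<in> S" by (auto simp: S_def)
      then show ?thesis unfolding MS using fin by (rule Max_ge[rotated])
    qed auto
  qed
qed

lemma M_le_t:
  assumes nn: "\<forall>k\<ge>1. 0 \<le> x k" and t: "t \<ge> 1"
  shows "M t x s \<le> t"
  using M_ge[OF nn t, of "M t x s" s] by auto

lemma M_zero: "M 0 x s = 0" by (simp add: M_def)

lemma M_step:
  assumes nn: "\<forall>k\<ge>1. 0 \<le> x k" and t: "t \<ge> 1"
  shows "M (Suc t) x s \<le> Suc (M t x s)"
proof -
  define K where "K = M (Suc t) x s"
  have "K = 0 \<or> (K \<le> Suc t \<and> top_sum (Suc t) x K \<le> s)"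
    using M_ge[OF nn, of "Suc t" K s] by (simp add: K_def)
  then show ?thesis
  proof
    assume "K \<le> Suc t \<and> top_sum (Suc t) x K \<le> s"
    moreover have "top_sum t x (K-1) \<le> top_sum (Suc t) x (K-1)"
      using top_mono_t[OF nn] by simp
    moreover have "top_sum (Suc t) x (K-1) \<le> top_sum (Suc t) x K"
      using top_mono_k[OF nn] by simp
    ultimately have "K - 1 \<le> M t x s" using M_ge[OF nn t, of "K-1" s] by auto
    then show ?thesis by (simp add: K_def)
  qed (simp add: K_def)
qed

lemma M_drop:
  assumes nn: "\<forall>k\<ge>1. 0 \<le> x k" and d: "M (Suc u) x s < M u x s" and ut: "Suc u \<le> t"
  shows "M t x s \<le> M (Suc u) x s"
proof (rule ccontr)
  define m where "m = M (Suc u) x s"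
  assume "\<not> M t x s \<le> M (Suc u) x s"
  then have "Suc m \<le> M t x s" by (simp add: m_def)
  have u1: "u \<ge> 1" using d M_zero[of x s] by (cases u) auto
  have "Suc m \<le> u" using d M_le_t[OF nn u1, of s] by (simp add: m_def)
  moreover have "\<not> Suc m \<le> M (Suc u) x s" by (simp add: m_def)
  ultimately have A: "top_sum (Suc u) x (Suc m) > s"
    using M_ge[OF nn, of "Suc u" "Suc m" s] by auto
  have "Suc m \<le> t \<and> top_sum t x (Suc m) \<le> s"
    using M_ge[OF nn, of t "Suc m" s] \<open>Suc m \<le> M t x s\<close> ut by auto
  moreover have "top_sum (Suc u) x (Suc m) \<le> top_sum t x (Suc m)"
    using top_mono_t[OF nn ut] .
  ultimately show False using A by linarith
qed

lemma M_after_drop: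
  assumes nn: "\<forall>k\<ge>1. 0 \<le> x k" and d: "M (Suc u) x s < M u x s" and ut: "Suc u \<le> t"
  shows "M (Suc t) x s \<le> M t x s"
proof -
  have "\<exists>v. Suc v \<le> t \<and> M (Suc v) x s < M v x s \<and> M t x s = M (Suc v) x s"
    using ut
  proof (induction t rule: dec_induct)
    case base
    then show ?case using d by blast
  next
    case (step n)
    then obtain v where v: "Suc v \<le> n" "M (Suc v) x s < M v x s" "M n x s = M (Suc v) x s" by blast
    have le: "M (Suc n) x s \<le> M n x s" using M_drop[OF nn v(2), of "Suc n"] v by simp
    show ?case
    proof (cases "M (Suc n) x s < M n x s")
      case True
      then show ?thesis by (intro exI[of _ n]) auto
    next
      case False
      then show ?thesis using v le by (intro exI[of _ v]) auto
    qed
  qed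
  then obtain v where v: "Suc v \<le> t" "M (Suc v) x s < M v x s" "M t x s = M (Suc v) x s" by blast
  show ?thesis using M_drop[OF nn v(2), of "Suc t"] v by simp
qed

lemma steps_mono:
  fixes f :: "nat \<Rightarrow> nat"
  assumes "\<And>u. a \<le> u \<Longrightarrow> u < b \<Longrightarrow> f u \<le> f (Suc u)" "a \<le> c" "c \<le> d" "d \<le> b"
  shows "f c \<le> f d"
  using assms(3,4)
proof (induction d rule: dec_induct)
  case (step n)
  then show ?case using assms(1)[of n] assms(2) by force
qed simp

lemma steps_anti:
  fixes f :: "nat \<Rightarrow> nat"
  assumes "\<And>u. a \<le> u \<Longrightarrow> u < b \<Longrightarrow> f (Suc u) \<le> f u" "a \<le> c" "c \<le> d" "d \<le> b"
  shows "f d \<le> f c"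
  using assms(3,4)
proof (induction d rule: dec_induct)
  case (step n)
  then show ?case using assms(1)[of n] assms(2) by force
qed simp

lemma cap_min:
  assumes "cap_unimodal h t1 t2" "t1 \<le> t2"
  shows "Min (h ` {t1..t2}) = min (h t1) (h t2)"
proof (rule Min_eqI)
  show "min (h t1) (h t2) \<in> h ` {t1..t2}" using assms(2) by (auto simp: min_def)
  fix y assume "y \<in> h ` {t1..t2}"
  then obtain t where t: "t \<in> {t1..t2}" "y = h t" by auto
  from assms(1) show "min (h t1) (h t2) \<le> y"
    unfolding cap_unimodal_def
  proof (elim disjE)
    assume "\<forall>a\<in>{t1..t2}. \<forall>b\<in>{t1..t2}. a \<le> b \<longrightarrow> h a \<le> h b"
    then show ?thesis using t assms(2) by fastforce
  next
    assume "\<forall>a\<in>{t1..t2}. \<forall>b\<in>{t1..t2}. a \<le> b \<longrightarrow> h b \<le> h a"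
    then show ?thesis using t assms(2) by fastforce
  next
    assume "\<exists>ts\<in>{t1..t2}.
        (\<forall>a\<in>{t1..ts}. \<forall>b\<in>{t1..ts}. a \<le> b \<longrightarrow> h a \<le> h b) \<and>
        (\<forall>a\<in>{ts..t2}. \<forall>b\<in>{ts..t2}. a \<le> b \<longrightarrow> h b \<le> h a)"
    then obtain ts where ts: "ts \<in> {t1..t2}"
        "\<forall>a\<in>{t1..ts}. \<forall>b\<in>{t1..ts}. a \<le> b \<longrightarrow> h a \<le> h b"
        "\<forall>a\<in>{ts..t2}. \<forall>b\<in>{ts..t2}. a \<le> b \<longrightarrow> h b \<le> h a" by blast
    show ?thesis
    proof (cases "t \<le> ts")
      case True
      then have "h t1 \<le> h t" using ts t by auto
      then show ?thesis by (simp add: t)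
    next
      case False
      then have "h t2 \<le> h t" using ts t by auto
      then show ?thesis by (simp add: t)
    qed
  qed
qed simp

lemma M_cap:
  assumes nn: "\<forall>k\<ge>1. 0 \<le> x k" and t1: "1 \<le> t1" and t12: "t1 \<le> t2"
  shows "cap_unimodal (\<lambda>t. M t x s) t1 t2"
proof (cases "\<exists>u. t1 \<le> u \<and> u < t2 \<and> M (Suc u) x s < M u x s")
  case False
  then have "\<And>u. t1 \<le> u \<Longrightarrow> u < t2 \<Longrightarrow> M u x s \<le> M (Suc u) x s" by fastforce
  then have "\<forall>a\<in>{t1..t2}. \<forall>b\<in>{t1..t2}. a \<le> b \<longrightarrow> M a x s \<le> M b x s"
    using steps_mono[of t1 t2 "\<lambda>t. M t x s"] by auto
  then show ?thesis unfolding cap_unimodal_def by blast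
next
  case True
  define u0 where "u0 = (LEAST u. t1 \<le> u \<and> u < t2 \<and> M (Suc u) x s < M u x s)"
  have u0: "t1 \<le> u0 \<and> u0 < t2 \<and> M (Suc u0) x s < M u0 x s"
    unfolding u0_def using True by (rule LeastI_ex)
  have before: "\<And>u. t1 \<le> u \<Longrightarrow> u < u0 \<Longrightarrow> M u x s \<le> M (Suc u) x s"
  proof -
    fix u assume "t1 \<le> u" "u < u0"
    then have "\<not> (t1 \<le> u \<and> u < t2 \<and> M (Suc u) x s < M u x s)"
      unfolding u0_def using not_less_Least by blast
    then show "M u x s \<le> M (Suc u) x s" using \<open>t1 \<le> u\<close> \<open>u < u0\<close> u0 by auto
  qed
  have after: "\<And>u. u0 \<le> u \<Longrightarrow> u < t2 \<Longrightarrow> M (Suc u) x s \<le> M u x s"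
  proof -
    fix u assume "u0 \<le> u" "u < t2"
    show "M (Suc u) x s \<le> M u x s"
    proof (cases "u = u0")
      case True then show ?thesis using u0 by simp
    next
      case False
      then show ?thesis using M_after_drop[OF nn, of u0 s u] u0 \<open>u0 \<le> u\<close> by simp
    qed
  qed
  have "(\<forall>a\<in>{t1..u0}. \<forall>b\<in>{t1..u0}. a \<le> b \<longrightarrow> M a x s \<le> M b x s)"
    using steps_mono[of t1 u0 "\<lambda>t. M t x s"] before by auto
  moreover have "(\<forall>a\<in>{u0..t2}. \<forall>b\<in>{u0..t2}. a \<le> b \<longrightarrow> M b x s \<le> M a x s)"
    using steps_anti[of u0 t2 "\<lambda>t. M t x s"] after by auto
  moreover have "u0 \<in> {t1..t2}" using u0 by auto
  ultimately show ?thesis unfolding cap_unimodal_def by blast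
qed

lemma M_grow:
  assumes nn: "\<forall>k\<ge>1. 0 \<le> x k" and t1: "1 \<le> t1" and t12: "t1 \<le> t"
  shows "M t x s \<le> t - t1 + M t1 x s"
  using t12
proof (induction t rule: dec_induct)
  case (step n)
  then show ?case using M_step[OF nn, of n s] t1 by simp
qed simp

theorem mainTheorem1:
  fixes x :: "nat \<Rightarrow> real"
  assumes nonneg: "\<forall>k\<ge>1. 0 \<le> x k"
  shows "(\<forall>t\<ge>1. \<forall>s1 s2. 0 \<le> s1 \<longrightarrow> s1 \<le> s2 \<longrightarrow> M t x s1 \<le> M t x s2)
    \<and> (\<forall>s t1 t2. 0 \<le> s \<longrightarrow> 1 \<le> t1 \<longrightarrow> t1 \<le> t2 \<longrightarrow>
          cap_unimodal (\<lambda>t. M t x s) t1 t2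
          \<and> Min ((\<lambda>t. M t x s) ` {t1..t2}) = min (M t1 x s) (M t2 x s))
    \<and> (\<forall>s t1 t2. 0 \<le> s \<longrightarrow> 1 \<le> t1 \<longrightarrow> t1 \<le> t2 \<longrightarrow>
          Max ((\<lambda>t. M t x s) ` {t1..t2}) \<le> t2 - t1 + M t1 x s)"
proof (intro conjI allI impI)
  fix t :: nat and s1 s2 :: real
  assume t: "t \<ge> 1" and "0 \<le> s1" "s1 \<le> s2"
  have "M t x s1 = 0 \<or> (M t x s1 \<le> t \<and> top_sum t x (M t x s1) \<le> s1)"
    using M_ge[OF nonneg t, of "M t x s1" s1] by simp
  then show "M t x s1 \<le> M t x s2"
    using M_ge[OF nonneg t, of "M t x s1" s2] \<open>s1 \<le> s2\<close> by auto
next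
  fix s :: real and t1 t2 :: nat
  assume "0 \<le> s" "1 \<le> t1" "t1 \<le> t2"
  then show cu: "cap_unimodal (\<lambda>t. M t x s) t1 t2" using M_cap[OF nonneg] by blast
  show "Min ((\<lambda>t. M t x s) ` {t1..t2}) = min (M t1 x s) (M t2 x s)"
    using cap_min[OF cu \<open>t1 \<le> t2\<close>] by simp
next
  fix s :: real and t1 t2 :: nat
  assume "0 \<le> s" "1 \<le> t1" "t1 \<le> t2"
  show "Max ((\<lambda>t. M t x s) ` {t1..t2}) \<le> t2 - t1 + M t1 x s"
  proof (rule Max.boundedI)
    fix y assume "y \<in> (\<lambda>t. M t x s) ` {t1..t2}"
    then obtain t where "t \<in> {t1..t2}" "y = M t x s" by auto
    then show "y \<le> t2 - t1 + M t1 x s"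
      using M_grow[OF nonneg \<open>1 \<le> t1\<close>, of t s] by auto
  qed (use \<open>t1 \<le> t2\<close> in auto)
qed

end
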